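(* Let $R$ be an integral domain, $M$ an $R$-module, and $\mathrm{Tor}(M)$ its $R$-torsion submodule. Then $\mathbb{P}(M)=\mathbb{P}(\mathrm{Tor}(M))\sqcup\mathbb{P}(M/\mathrm{Tor}(M))$, in the following sense: $\mathbb{P}(M)$ is the disjoint union of the set $\mathbb{T}(M)$ of classes represented by nonzero torsion elements and the set $\mathbb{F}(M)$ of classes represented by non-torsion elements; the inclusion $\mathrm{Tor}(M)\to M$ induces a bijection $\mathbb{P}(\mathrm{Tor}(M))\to\mathbb{T}(M)$; and $[a]\mapsto[\bar a]$, with $\bar a$ the image of $a$ in $M/\mathrm{Tor}(M)$, is a bijection $\mathbb{F}(M)\to\mathbb{P}(M/\mathrm{Tor}(M))$.
   Context: For an $R$-module $N$ let $N^\circ=N\setminus\{0\}$; define $x\sim'y$ on $N^\circ$ if there exist $m\in N$ and $r,s\in R$ with $x=rm$, $y=sm$; let $\sim$ be the equivalence relation generated by $\sim'$; and let $\mathbb{P}(N)=N^\circ/\sim$, with $[x]$ the class of $x$. An element is $R$-torsion if it is annihilated by some nonzero element of $R$. *)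

theory Defs
  imports Complex_Main
begin

text \<open>A module is given here abstractly by a carrier set N, a scalar action sc and a zero z,
so that the same construction applies to M, to the submodule Tor(M), and to the
quotient M/Tor(M) (whose elements are cosets).\<close>

definition pre_rel :: "'m set \<Rightarrow> ('r \<Rightarrow> 'm \<Rightarrow> 'm) \<Rightarrow> 'm \<Rightarrow> 'm \<Rightarrow> 'm \<Rightarrow> bool" where
  "pre_rel N sc z x y \<longleftrightarrow> x \<in> N - {z} \<and> y \<in> N - {z} \<and>
     (\<exists>m\<in>N. \<exists>r s. x = sc r m \<and> y = sc s m)"

definition proj_rel :: "'m set \<Rightarrow> ('r \<Rightarrow> 'm \<Rightarrow> 'm) \<Rightarrow> 'm \<Rightarrow> ('m \<times> 'm) set" where
  "proj_rel N sc z = {(x, y). x \<in> N - {z} \<and> y \<in> N - {z} \<and> equivclp (pre_rel N sc z) x y}"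

definition Proj :: "'m set \<Rightarrow> ('r \<Rightarrow> 'm \<Rightarrow> 'm) \<Rightarrow> 'm \<Rightarrow> 'm set set" where
  "Proj N sc z = (N - {z}) // proj_rel N sc z"

definition pcls :: "'m set \<Rightarrow> ('r \<Rightarrow> 'm \<Rightarrow> 'm) \<Rightarrow> 'm \<Rightarrow> 'm \<Rightarrow> 'm set" where
  "pcls N sc z x = proj_rel N sc z `` {x}"

definition torsion :: "('r::idom \<Rightarrow> 'm::ab_group_add \<Rightarrow> 'm) \<Rightarrow> 'm set" where
  "torsion sc = {x. \<exists>r. r \<noteq> 0 \<and> sc r x = 0}"

definition coset :: "'m::ab_group_add set \<Rightarrow> 'm \<Rightarrow> 'm set" where
  "coset T a = {y. y - a \<in> T}"

definition quot_carrier :: "'m::ab_group_add set \<Rightarrow> 'm set set" where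
  "quot_carrier T = range (coset T)"

definition quot_scale :: "('r \<Rightarrow> 'm::ab_group_add \<Rightarrow> 'm) \<Rightarrow> 'm set \<Rightarrow> 'r \<Rightarrow> 'm set \<Rightarrow> 'm set" where
  "quot_scale sc T r C = {y. \<exists>x\<in>C. y - sc r x \<in> T}"

end

theory Submission
  imports Defs
begin
lemma equivclp_map:
  assumes "equivclp R x y" "P x"
    "\<And>a b. R a b \<Longrightarrow> P a \<longleftrightarrow> P b"
    "\<And>a b. R a b \<Longrightarrow> P a \<Longrightarrow> P b \<Longrightarrow> equivclp R' (f a) (f b)"
  shows "equivclp R' (f x) (f y) \<and> P y"
proof -
  have "(symclp R)\<^sup>*\<^sup>* x y" using assms(1) by (simp add: equivclp_def)
  then show ?thesis
  proof (induction rule: rtranclp_induct)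
    case base then show ?case using assms(2) by simp
  next
    case (step y z)
    then have Py: "P y" and e: "equivclp R' (f x) (f y)" by auto
    from step(2) have "R y z \<or> R z y" by (auto simp: symclp_def)
    then have "P z \<and> equivclp R' (f y) (f z)"
      using Py assms(3,4) by (metis equivclp_sym)
    then show ?case using e equivclp_trans by metis
  qed
qed

lemma class_bij:
  assumes eA: "equiv A r" and eB: "equiv B s" and sub: "A' \<subseteq> A" and hB: "h ` A' \<subseteq> B"
   and iff: "\<And>x y. x\<in>A' \<Longrightarrow> y\<in>A' \<Longrightarrow> (x,y)\<in>r \<longleftrightarrow> (h x, h y)\<in>s"
  shows "\<exists>g. bij_betw g ((\<lambda>x. r``{x}) ` A') ((\<lambda>x. s``{h x}) ` A') \<and> (\<forall>x\<in>A'. g (r``{x}) = s``{h x})"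
proof -
  define g where "g C = s``{h (SOME x. x \<in> A' \<and> C = r``{x})}" for C
  have key: "g (r``{x}) = s``{h x}" if x: "x \<in> A'" for x
  proof -
    define x' where "x' = (SOME y. y \<in> A' \<and> r``{x} = r``{y})"
    have "x' \<in> A' \<and> r``{x} = r``{x'}" unfolding x'_def by (rule someI[of _ x]) (use x in auto)
    then have "x' \<in> A'" "(x,x') \<in> r" using eq_equiv_class_iff[OF eA] sub x by auto
    then have "(h x, h x') \<in> s" using iff x by auto
    then have "s``{h x} = s``{h x'}" using eq_equiv_class_iff[OF eB] hB x \<open>x' \<in> A'\<close> by auto
    then show ?thesis by (simp add: g_def x'_def)
  qed
  have "inj_on g ((\<lambda>x. r``{x}) ` A')"
  proof (rule inj_onI, clarify)
    fix x y assume x: "x \<in> A'" and y: "y \<in> A'" and e: "g (r``{x}) = g (r``{y})"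
    then have "s``{h x} = s``{h y}" using key by auto
    then have "(h x, h y) \<in> s" by (metis eq_equiv_class_iff[OF eB] hB x y image_subset_iff)
    then have "(x,y) \<in> r" using iff x y by auto
    then show "r``{x} = r``{y}" using eq_equiv_class_iff[OF eA] sub x y by auto
  qed
  moreover have "g ` ((\<lambda>x. r``{x}) ` A') = (\<lambda>x. s``{h x}) ` A'"
    using key by (auto simp: image_iff)
  ultimately show ?thesis using key unfolding bij_betw_def by blast
qed

lemma equiv_proj: "equiv (N - {z}) (proj_rel N sc z)"
  unfolding equiv_def refl_on_def sym_def trans_def proj_rel_def
  by (auto intro: equivclp_sym equivclp_trans)

context
  fixes sc :: "'r::idom \<Rightarrow> 'm::ab_group_add \<Rightarrow> 'm"
  assumes m: "module sc"
begin
interpretation module sc by (rule m)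
lemma tor0: "0 \<in> torsion sc"
  unfolding torsion_def by (auto intro!: exI[of _ 1])

lemma tor_scale: "x \<in> torsion sc \<Longrightarrow> sc r x \<in> torsion sc"
  unfolding torsion_def
proof clarify
  fix t assume "t \<noteq> 0" "sc t x = 0"
  have "sc t (sc r x) = sc r (sc t x)" by (simp add: mult.commute)
  then have "sc t (sc r x) = 0" using \<open>sc t x = 0\<close> by simp
  then show "\<exists>t. t \<noteq> 0 \<and> sc t (sc r x) = 0" using \<open>t \<noteq> 0\<close> by blast
qed

lemma tor_diff: "x \<in> torsion sc \<Longrightarrow> y \<in> torsion sc \<Longrightarrow> x - y \<in> torsion sc"
  unfolding torsion_def
proof clarify
  fix t u assume "t \<noteq> 0" "sc t x = 0" "u \<noteq> 0" "sc u y = 0"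
  then have "sc (u*t) x = 0" "sc (t*u) y = 0" by (simp_all flip: scale_scale)
  then show "\<exists>r. r \<noteq> 0 \<and> sc r (x - y) = 0"
    using \<open>t \<noteq> 0\<close> \<open>u \<noteq> 0\<close>
    by (intro exI[of _ "u*t"]) (simp add: scale_right_diff_distrib mult.commute)
qed

lemma tor_gen: "sc r m \<noteq> 0 \<Longrightarrow> sc r m \<in> torsion sc \<Longrightarrow> m \<in> torsion sc"
  unfolding torsion_def
proof clarify
  fix t assume "sc r m \<noteq> 0" "t \<noteq> 0" "sc t (sc r m) = 0"
  moreover have "r \<noteq> 0" using \<open>sc r m \<noteq> 0\<close> by auto
  ultimately show "\<exists>r. r \<noteq> 0 \<and> sc r m = 0"
    by (intro exI[of _ "t*r"]) simp
qed
lemma pre_tor: "pre_rel UNIV sc 0 x y \<Longrightarrow> x \<in> torsion sc \<longleftrightarrow> y \<in> torsion sc"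
  unfolding pre_rel_def
proof (elim conjE bexE exE)
  fix m r s assume "x \<in> UNIV - {0}" "y \<in> UNIV - {0}" and xy: "x = sc r m" "y = sc s m"
  then have "sc r m \<noteq> 0" "sc s m \<noteq> 0" by auto
  then show ?thesis using xy tor_gen[of r m] tor_gen[of s m] tor_scale[of m] by blast
qed

lemma pre_tor2: "pre_rel UNIV sc 0 x y \<Longrightarrow> x \<in> torsion sc \<Longrightarrow> pre_rel (torsion sc) sc 0 x y"
  unfolding pre_rel_def
proof (elim conjE bexE exE)
  fix m r s assume "x \<in> UNIV - {0}" "y \<in> UNIV - {0}" and xy: "x = sc r m" "y = sc s m"
    and xt: "x \<in> torsion sc"
  then have "sc r m \<noteq> 0" "sc s m \<noteq> 0" by auto
  then have mt: "m \<in> torsion sc" using xy xt tor_gen[of r m] by blast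
  then have "y \<in> torsion sc" using xy tor_scale by blast
  then show "x \<in> torsion sc - {0} \<and> y \<in> torsion sc - {0} \<and> (\<exists>m\<in>torsion sc. \<exists>r s. x = sc r m \<and> y = sc s m)"
    using mt xt xy \<open>x \<in> UNIV - {0}\<close> \<open>y \<in> UNIV - {0}\<close> by blast
qed

lemma coset_eq: "coset (torsion sc) a = coset (torsion sc) b \<longleftrightarrow> a - b \<in> torsion sc"
proof
  assume "coset (torsion sc) a = coset (torsion sc) b"
  then have "a \<in> coset (torsion sc) b" using tor0 by (auto simp: coset_def)
  then show "a - b \<in> torsion sc" by (simp add: coset_def)
next
  assume h: "a - b \<in> torsion sc"
  show "coset (torsion sc) a = coset (torsion sc) b"
    unfolding coset_def
  proof safe
    fix y assume "y - a \<in> torsion sc"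
    from tor_diff[OF this tor_diff[OF tor0 h]] show "y - b \<in> torsion sc" by simp
  next
    fix y assume "y - b \<in> torsion sc"
    from tor_diff[OF this h] show "y - a \<in> torsion sc" by simp
  qed
qed

lemma coset_T: "coset (torsion sc) a = torsion sc \<longleftrightarrow> a \<in> torsion sc"
proof -
  have "torsion sc = coset (torsion sc) 0" by (simp add: coset_def)
  then show ?thesis using coset_eq[of a 0] by simp
qed

lemma qscale: "quot_scale sc (torsion sc) r (coset (torsion sc) m) = coset (torsion sc) (sc r m)"
proof (rule set_eqI)
  fix y
  show "y \<in> quot_scale sc (torsion sc) r (coset (torsion sc) m) \<longleftrightarrow> y \<in> coset (torsion sc) (sc r m)"
  proof
    assume "y \<in> quot_scale sc (torsion sc) r (coset (torsion sc) m)"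
    then obtain x where "x - m \<in> torsion sc" "y - sc r x \<in> torsion sc"
      unfolding quot_scale_def coset_def by blast
    have "sc r (x - m) \<in> torsion sc" using \<open>x - m \<in> torsion sc\<close> by (rule tor_scale)
    from tor_diff[OF \<open>y - sc r x \<in> torsion sc\<close> tor_diff[OF tor0 this]]
    show "y \<in> coset (torsion sc) (sc r m)" by (simp add: scale_right_diff_distrib coset_def)
  next
    assume "y \<in> coset (torsion sc) (sc r m)"
    then have "m - m \<in> torsion sc \<and> y - sc r m \<in> torsion sc" using tor0 by (simp add: coset_def)
    then show "y \<in> quot_scale sc (torsion sc) r (coset (torsion sc) m)"
      unfolding quot_scale_def coset_def by blast
  qed
qed

lemma back_eq:
  assumes "x - sc r m \<in> torsion sc" "y - sc s m \<in> torsion sc" "x \<notin> torsion sc" "y \<notin> torsion sc"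
  shows "equivclp (pre_rel UNIV sc 0) x y"
proof -
  obtain t where t: "t \<noteq> 0" "sc t (x - sc r m) = 0" using assms(1) by (auto simp: torsion_def)
  obtain u where u: "u \<noteq> 0" "sc u (y - sc s m) = 0" using assms(2) by (auto simp: torsion_def)
  define w where "w = t * u"
  have w0: "w \<noteq> 0" using t u by (simp add: w_def)
  have wx: "sc w x = sc (w*r) m"
    using t(2) by (simp add: w_def scale_right_diff_distrib mult.commute[of t u] flip: scale_scale)
  have wy: "sc w y = sc (w*s) m"
    using u(2) by (simp add: w_def scale_right_diff_distrib flip: scale_scale)
  have nz: "sc w x \<noteq> 0" "sc w y \<noteq> 0" "x \<noteq> 0" "y \<noteq> 0"
    using w0 assms(3,4) tor0 unfolding torsion_def by auto
  have 1: "pre_rel UNIV sc 0 x (sc w x)"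
  proof -
    have "x = sc 1 x \<and> sc w x = sc w x" by simp
    then show ?thesis unfolding pre_rel_def using nz by blast
  qed
  have 2: "pre_rel UNIV sc 0 (sc w x) (sc w y)"
    unfolding pre_rel_def using nz wx wy by auto
  have 3: "pre_rel UNIV sc 0 y (sc w y)"
  proof -
    have "y = sc 1 y \<and> sc w y = sc w y" by simp
    then show ?thesis unfolding pre_rel_def using nz by blast
  qed
  show ?thesis using 1 2 3
    by (meson converse_r_into_equivclp equivclp_trans r_into_equivclp)
qed

end
theorem theorem4p17:
  fixes sc :: "'r::idom \<Rightarrow> 'm::ab_group_add \<Rightarrow> 'm"
  assumes "module sc"
  defines "T \<equiv> torsion sc"
  defines "TT \<equiv> {pcls UNIV sc 0 x | x. x \<in> T \<and> x \<noteq> 0}"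
  defines "FF \<equiv> {pcls UNIV sc 0 x | x. x \<notin> T}"
  shows "Proj UNIV sc 0 = TT \<union> FF \<and> TT \<inter> FF = {}
    \<and> (\<exists>f. bij_betw f (Proj T sc 0) TT \<and> (\<forall>x \<in> T - {0}. f (pcls T sc 0 x) = pcls UNIV sc 0 x))
    \<and> (\<exists>g. bij_betw g FF (Proj (quot_carrier T) (quot_scale sc T) T)
           \<and> (\<forall>a. a \<notin> T \<longrightarrow>
                g (pcls UNIV sc 0 a) = pcls (quot_carrier T) (quot_scale sc T) T (coset T a)))"
proof -
  note m = assms(1)
  define E where "E = proj_rel UNIV sc 0"
  define P where "P = pre_rel UNIV sc 0"
  have eqE: "equiv (UNIV - {0}) E" unfolding E_def by (rule equiv_proj)
  have pc: "\<And>x. pcls UNIV sc 0 x = E``{x}" by (simp add: pcls_def E_def)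
  have T0: "0 \<in> T" using tor0[OF m] T_def by simp
  have nz: "\<And>x. x \<notin> T \<Longrightarrow> x \<noteq> 0" using T0 by auto
  have st: "\<And>a b. P a b \<Longrightarrow> (a \<in> T) = (b \<in> T)" using pre_tor[OF m] unfolding T_def P_def by blast
  have inv: "y \<in> T" if "equivclp P x y" "x \<in> T" for x y
  proof -
    have "equivclp P (id x) (id y) \<and> y \<in> T"
      by (rule equivclp_map[where P="\<lambda>x. x \<in> T", OF that st]) (auto intro!: r_into_equivclp)
    then show ?thesis by simp
  qed
  have inv2: "y \<notin> T" if "equivclp P x y" "x \<notin> T" for x y
    using inv[OF equivclp_sym[OF that(1)]] that(2) by blast
  have p1: "Proj UNIV sc 0 = TT \<union> FF"
    unfolding Proj_def quotient_def TT_def FF_def pc E_def[symmetric] using T0 nz by blast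
  have p2: "TT \<inter> FF = {}"
  proof (rule ccontr)
    assume "TT \<inter> FF \<noteq> {}"
    then obtain x y where x: "x \<in> T" "x \<noteq> 0" and y: "y \<notin> T" and e: "E``{x} = E``{y}"
      unfolding TT_def FF_def pc by blast
    then have "(x,y) \<in> E" using eq_equiv_class_iff[OF eqE] nz by blast
    then have "equivclp P x y" by (simp add: E_def proj_rel_def P_def)
    then show False using inv x y by blast
  qed
  define ET where "ET = proj_rel T sc 0"
  have eqT: "equiv (T - {0}) ET" unfolding ET_def by (rule equiv_proj)
  have iffT: "(x,y) \<in> ET \<longleftrightarrow> (id x, id y) \<in> E" if "x \<in> T - {0}" "y \<in> T - {0}" for x y
  proof
    assume "(x,y) \<in> ET"
    then have h: "equivclp (pre_rel T sc 0) x y" by (simp add: ET_def proj_rel_def)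
    have monoP: "\<And>a b. pre_rel T sc 0 a b \<Longrightarrow> P a b" unfolding P_def pre_rel_def by blast
    have "equivclp P (id x) (id y) \<and> True"
      by (rule equivclp_map[where P="\<lambda>_. True", OF h]) (simp_all add: r_into_equivclp monoP)
    then have "equivclp P x y" by simp
    then show "(id x, id y) \<in> E" using that by (simp add: E_def proj_rel_def P_def)
  next
    assume "(id x, id y) \<in> E"
    then have h: "equivclp P x y" by (simp add: E_def proj_rel_def P_def)
    have stepT: "\<And>a b. P a b \<Longrightarrow> a \<in> T \<Longrightarrow> pre_rel T sc 0 a b"
      using pre_tor2[OF m] unfolding P_def T_def by blast
    have "equivclp (pre_rel T sc 0) (id x) (id y) \<and> y \<in> T"
      by (rule equivclp_map[where P="\<lambda>x. x \<in> T", OF h _ st]) (use that in \<open>simp_all add: r_into_equivclp stepT\<close>)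
    then have "equivclp (pre_rel T sc 0) x y" by simp
    then show "(x,y) \<in> ET" using that by (simp add: ET_def proj_rel_def)
  qed
  obtain f where f: "bij_betw f ((\<lambda>x. ET``{x}) ` (T - {0})) ((\<lambda>x. E``{id x}) ` (T - {0}))"
      "\<forall>x\<in>T - {0}. f (ET``{x}) = E``{id x}"
    using class_bij[OF eqT eqE, of "T - {0}" id] iffT by auto
  have "Proj T sc 0 = (\<lambda>x. ET``{x}) ` (T - {0})"
    unfolding Proj_def quotient_def ET_def by auto
  moreover have "TT = (\<lambda>x. E``{id x}) ` (T - {0})"
    unfolding TT_def pc by auto
  ultimately have p3: "\<exists>f. bij_betw f (Proj T sc 0) TT \<and> (\<forall>x \<in> T - {0}. f (pcls T sc 0 x) = pcls UNIV sc 0 x)"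
    using f by (intro exI[of _ f]) (simp add: pcls_def ET_def E_def)
  define Q where "Q = quot_carrier T"
  define qs where "qs = quot_scale sc T"
  define S where "S = proj_rel Q qs T"
  define rep where "rep C = (SOME c. C = coset T c)" for C
  have eqS: "equiv (Q - {T}) S" unfolding S_def by (rule equiv_proj)
  have cT: "\<And>a. coset T a = T \<longleftrightarrow> a \<in> T" using coset_T[OF m] T_def by simp
  have ceq: "\<And>a b. coset T a = coset T b \<longleftrightarrow> a - b \<in> T" using coset_eq[OF m] T_def by simp
  have qsc: "\<And>r a. qs r (coset T a) = coset T (sc r a)" using qscale[OF m] T_def qs_def by simp
  have rep: "C = coset T (rep C)" if CQ: "C \<in> Q" for C
  proof -
    obtain c where "C = coset T c" using CQ unfolding Q_def quot_carrier_def by blast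
    then show ?thesis unfolding rep_def by (rule someI)
  qed
  have bk: "equivclp P x y" if "x - sc r a \<in> T" "y - sc s a \<in> T" "x \<notin> T" "y \<notin> T" for x y r s a
    using back_eq[OF m, of x r a y s] that unfolding T_def P_def by blast
  have himg: "coset T ` (- T) \<subseteq> Q - {T}" using cT unfolding Q_def quot_carrier_def by auto
  have qstep: "pre_rel Q qs T (coset T a) (coset T b)" if "P a b" "a \<notin> T" "b \<notin> T" for a b
  proof -
    from that(1) obtain mm r s where "a = sc r mm" "b = sc s mm" unfolding P_def pre_rel_def by blast
    then have "coset T a = qs r (coset T mm)" "coset T b = qs s (coset T mm)" using qsc by auto
    moreover have "coset T mm \<in> Q" unfolding Q_def quot_carrier_def by auto
    ultimately show ?thesis using himg that(2,3) unfolding pre_rel_def by blast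
  qed
  have repstep: "equivclp P (rep C) (rep D)" if "pre_rel Q qs T C D" for C D
  proof -
    from that obtain M r s where C: "C \<in> Q - {T}" and D: "D \<in> Q - {T}" and M: "M \<in> Q"
      and CD: "C = qs r M" "D = qs s M" unfolding pre_rel_def by blast
    obtain mm where mm: "M = coset T mm" using M unfolding Q_def quot_carrier_def by blast
    have "coset T (rep C) = coset T (sc r mm)" using rep[of C] C CD mm qsc by auto
    moreover have "coset T (rep D) = coset T (sc s mm)" using rep[of D] D CD mm qsc by auto
    moreover have "rep C \<notin> T" "rep D \<notin> T" using rep[of C] rep[of D] C D cT by auto
    ultimately show ?thesis using bk ceq by blast
  qed
  have self: "equivclp P x (rep (coset T x))" if "x \<notin> T" for x
  proof -
    have "coset T x \<in> Q" unfolding Q_def quot_carrier_def by auto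
    then have e: "coset T x = coset T (rep (coset T x))" by (rule rep)
    then have "rep (coset T x) - x \<in> T" using ceq[of "rep (coset T x)" x] by simp
    then have "rep (coset T x) - sc 1 x \<in> T" by (simp add: module.scale_one[OF m])
    moreover have "x - sc 1 x \<in> T" using T0 m by (simp add: module.scale_one)
    moreover have "rep (coset T x) \<notin> T" using e cT[of x] cT[of "rep (coset T x)"] that by simp
    ultimately show ?thesis using bk that by blast
  qed
  have iffQ: "(x,y) \<in> E \<longleftrightarrow> (coset T x, coset T y) \<in> S" if "x \<in> - T" "y \<in> - T" for x y
  proof
    assume "(x,y) \<in> E"
    then have "equivclp P x y" by (simp add: E_def proj_rel_def P_def)
    then have h: "equivclp P x y" .
    have st': "\<And>a b. P a b \<Longrightarrow> (a \<notin> T) = (b \<notin> T)" using st by blast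
    have "equivclp (pre_rel Q qs T) (coset T x) (coset T y) \<and> y \<notin> T"
      by (rule equivclp_map[where P="\<lambda>x. x \<notin> T", OF h _ st']) (use that in \<open>simp_all add: r_into_equivclp qstep\<close>)
    then have "equivclp (pre_rel Q qs T) (coset T x) (coset T y)" by simp
    then show "(coset T x, coset T y) \<in> S" using that himg by (auto simp: S_def proj_rel_def)
  next
    assume "(coset T x, coset T y) \<in> S"
    then have "equivclp (pre_rel Q qs T) (coset T x) (coset T y)" by (simp add: S_def proj_rel_def)
    then have h: "equivclp (pre_rel Q qs T) (coset T x) (coset T y)" .
    have "equivclp P (rep (coset T x)) (rep (coset T y)) \<and> True"
      by (rule equivclp_map[where P="\<lambda>_. True", OF h]) (simp_all add: repstep)
    then have "equivclp P (rep (coset T x)) (rep (coset T y))" by simp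
    then have "equivclp P x y" using self that
      by (meson ComplD equivclp_sym equivclp_trans)
    then show "(x,y) \<in> E" using that nz by (simp add: E_def proj_rel_def P_def)
  qed
  obtain g where g: "bij_betw g ((\<lambda>x. E``{x}) ` (- T)) ((\<lambda>x. S``{coset T x}) ` (- T))"
      "\<forall>x\<in>- T. g (E``{x}) = S``{coset T x}"
    using class_bij[OF eqE eqS _ himg] iffQ nz by auto
  have "Proj Q qs T = (\<lambda>C. S``{C}) ` (Q - {T})"
    by (auto simp: Proj_def quotient_def S_def)
  also have "Q - {T} = coset T ` (- T)" using cT unfolding Q_def quot_carrier_def by auto
  finally have "Proj Q qs T = (\<lambda>x. S``{coset T x}) ` (- T)" by (simp add: image_image)
  moreover have "FF = (\<lambda>x. E``{x}) ` (- T)"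
    unfolding FF_def pc by auto
  ultimately have p4: "\<exists>g. bij_betw g FF (Proj (quot_carrier T) (quot_scale sc T) T)
           \<and> (\<forall>a. a \<notin> T \<longrightarrow>
                g (pcls UNIV sc 0 a) = pcls (quot_carrier T) (quot_scale sc T) T (coset T a))"
    using g by (intro exI[of _ g]) (simp add: pcls_def S_def Q_def qs_def E_def)
  show ?thesis using p1 p2 p3 p4 by blast
qed

end
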